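(* Let $d$ be a metric on $\mathbb R^n$ induced by a norm, $\delta>0$, and let $\tilde w:\mathcal D^n(\delta)\to\mathcal D^n(\delta)$ be the $\delta$-roundoff of a contraction $w$ on $(\mathbb R^n,d)$ with contractivity factor $\lambda\in[0,1)$ and fixed point $x_f$. Then the minimal absorbing set $\mathcal M[\tilde w]$ (for $\tilde w$ in $\mathcal D^n(\delta)$) exists, is finite, and its cardinality is at most the cardinality of $\Lambda(x_f,r_0)=\{\tilde y\in\mathcal D^n(\delta):d(\tilde y,x_f)\le\theta(1-\lambda)^{-1}\}$.
   Context: For $m\in\mathbb Z^n$, $C_\delta(m)=\prod_{j=1}^n[(m_j-\tfrac12)\delta,(m_j+\tfrac12)\delta)$; $\mathcal D^n(\delta)=\{\delta m:m\in\mathbb Z^n\}\subset\mathbb R^n$. The $\delta$-roundoff of $x\in\mathbb R^n$ is $\tilde x=\delta m$ where $x\in C_\delta(m)$; the $\delta$-roundoff of $w$ is $\tilde w(\tilde x)=\widetilde{w(\tilde x)}$. $\theta:=\tfrac12\operatorname{diam}_d(C_\delta(0))$. For nonempty $C$ with $\tilde w(C)\subset C$, $\Lambda\subset C$ is absorbing for $\tilde w$ in $C$ if for every $\tilde x\in C$ there is $N$ with $\tilde w^{\circ i}(\tilde x)\in\Lambda$ for all $i\ge N$. If the intersection of all absorbing sets in $C=\mathcal D^n(\delta)$ is itself absorbing, it is the minimal absorbing set $\mathcal M[\tilde w]$ and is said to exist. *)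

theory Defs
  imports "HOL-Analysis.Analysis"
begin

text \<open>A norm on R^n (arbitrary, not necessarily Euclidean); the metric is d x y = N (x - y).\<close>
definition is_norm :: "(real^'n \<Rightarrow> real) \<Rightarrow> bool" where
  "is_norm N \<longleftrightarrow> (\<forall>x. 0 \<le> N x) \<and> (\<forall>x. N x = 0 \<longleftrightarrow> x = 0)
     \<and> (\<forall>c x. N (c *s x) = \<bar>c\<bar> * N x) \<and> (\<forall>x y. N (x + y) \<le> N x + N y)"

definition cube :: "real \<Rightarrow> int^'n \<Rightarrow> (real^'n) set" where
  "cube \<delta> m = {x. \<forall>j. (real_of_int (m$j) - 1/2) * \<delta> \<le> x$j \<and> x$j < (real_of_int (m$j) + 1/2) * \<delta>}"

definition grid :: "real \<Rightarrow> (real^'n) set" where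
  "grid \<delta> = {\<delta> *s (\<chi> j. real_of_int (m$j)) | m :: int^'n. True}"

definition roundoff :: "real \<Rightarrow> real^'n \<Rightarrow> real^'n" where
  "roundoff \<delta> x = \<delta> *s (\<chi> j. real_of_int ((THE m. x \<in> cube \<delta> m) $ j))"

definition roundoff_map :: "real \<Rightarrow> (real^'n \<Rightarrow> real^'n) \<Rightarrow> real^'n \<Rightarrow> real^'n" where
  "roundoff_map \<delta> w = (\<lambda>x. roundoff \<delta> (w x))"

definition absorbing :: "('a \<Rightarrow> 'a) \<Rightarrow> 'a set \<Rightarrow> 'a set \<Rightarrow> bool" where
  "absorbing f C \<Lambda> \<longleftrightarrow> \<Lambda> \<subseteq> C \<and> (\<forall>x\<in>C. \<exists>N. \<forall>i\<ge>N. (f ^^ i) x \<in> \<Lambda>)"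

text \<open>Intersection of all absorbing sets; it is the minimal absorbing set M[f]
  and "exists" iff it is itself absorbing.\<close>
definition min_absorbing :: "('a \<Rightarrow> 'a) \<Rightarrow> 'a set \<Rightarrow> 'a set" where
  "min_absorbing f C = \<Inter>{\<Lambda>. absorbing f C \<Lambda>}"

definition min_absorbing_exists :: "('a \<Rightarrow> 'a) \<Rightarrow> 'a set \<Rightarrow> bool" where
  "min_absorbing_exists f C \<longleftrightarrow> absorbing f C (min_absorbing f C)"

definition theta :: "(real^'n \<Rightarrow> real) \<Rightarrow> real \<Rightarrow> real" where
  "theta N \<delta> = Sup {N (x - y) | x y. x \<in> cube \<delta> (0::int^'n) \<and> y \<in> cube \<delta> 0} / 2"

end

theory Submission
  imports Defs
begin

lemma N_basic:
  assumes "is_norm N"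
  shows "N 0 = 0" "N (- x) = N x" "N (x + y) \<le> N x + N y" "0 \<le> N x"
    "N (c *s x) = \<bar>c\<bar> * N x" "N (x - y) = N (y - x)"
proof -
  show "N 0 = 0" using assms unfolding is_norm_def by blast
  show neg: "N (- x) = N x" for x using assms unfolding is_norm_def
    by (metis abs_minus_cancel abs_one mult_1 vector_sneg_minus1)
  show "N (x + y) \<le> N x + N y" "0 \<le> N x" "N (c *s x) = \<bar>c\<bar> * N x"
    using assms unfolding is_norm_def by blast+
  show "N (x - y) = N (y - x)" using neg[of "x - y"] by simp
qed

lemma N_sum:
  assumes "is_norm N" "finite S"
  shows "N (sum f S) \<le> (\<Sum>i\<in>S. N (f i))"
  using assms(2)
proof (induction S rule: finite_induct)
  case empty then show ?case using N_basic[OF assms(1)] by simp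
next
  case (insert a S)
  then show ?case using N_basic(3)[OF assms(1), of "f a" "sum f S"] by simp
qed

lemma N_upper:
  assumes "is_norm N"
  shows "N (v::real^'n) \<le> (\<Sum>j\<in>UNIV. \<bar>v$j\<bar> * N (axis j 1))"
proof -
  have "N v = N (\<Sum>j\<in>UNIV. (v$j) *s axis j 1)" by (simp add: basis_expansion)
  also have "\<dots> \<le> (\<Sum>j\<in>UNIV. N ((v$j) *s axis j 1))" by (rule N_sum[OF assms]) simp
  also have "\<dots> = (\<Sum>j\<in>UNIV. \<bar>v$j\<bar> * N (axis j 1))"
    using N_basic(5)[OF assms] by simp
  finally show ?thesis .
qed

lemma N_upper_norm:
  assumes "is_norm N"
  shows "N (v::real^'n) \<le> (\<Sum>j\<in>UNIV. N (axis j 1)) * norm v"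
proof -
  have "N v \<le> (\<Sum>j\<in>UNIV. \<bar>v$j\<bar> * N (axis j 1))" by (rule N_upper[OF assms])
  also have "\<dots> \<le> (\<Sum>j\<in>UNIV. norm v * N (axis j 1))"
    by (rule sum_mono) (simp add: N_basic(4)[OF assms] component_le_norm_cart mult_right_mono)
  finally show ?thesis by (simp add: sum_distrib_left mult.commute)
qed

lemma N_cont:
  assumes "is_norm N"
  shows "continuous_on S (N :: real^'n \<Rightarrow> real)"
proof -
  let ?K = "(\<Sum>j\<in>UNIV. N (axis j 1 :: real^'n))"
  have "?K-lipschitz_on S N"
  proof (rule lipschitz_onI)
    fix x y :: "real^'n"
    have "N x \<le> N y + N (x - y)" using N_basic(3)[OF assms, of y "x - y"] by simp
    moreover have "N y \<le> N x + N (x - y)"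
      using N_basic(3)[OF assms, of x "y - x"] N_basic(6)[OF assms, of x y] by simp
    ultimately have "dist (N x) (N y) \<le> N (x - y)" by (simp add: dist_real_def)
    also have "\<dots> \<le> ?K * norm (x - y)" by (rule N_upper_norm[OF assms])
    finally show "dist (N x) (N y) \<le> ?K * dist x y" by (simp add: dist_norm)
    show "0 \<le> ?K" using N_basic(4)[OF assms] by (simp add: sum_nonneg)
  qed
  then show ?thesis by (rule lipschitz_on_continuous_on)
qed

lemma N_lower:
  assumes "is_norm N"
  obtains c where "c > 0" "\<And>v::real^'n. c * norm v \<le> N v"
proof -
  obtain i :: 'n where True by blast
  have ne: "sphere (0::real^'n) 1 \<noteq> {}"
    using norm_axis_1[of i] by (metis mem_sphere_0 empty_iff)
  have "\<exists>x\<in>sphere (0::real^'n) 1. \<forall>y\<in>sphere 0 1. N x \<le> N y"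
    by (rule continuous_attains_inf[OF compact_sphere ne N_cont[OF assms]])
  then obtain x0 :: "real^'n" where x0: "norm x0 = 1" "\<And>y. norm y = 1 \<Longrightarrow> N x0 \<le> N y"
    by auto
  have "x0 \<noteq> 0" using x0 by auto
  then have c: "N x0 > 0" using assms N_basic(4)[OF assms, of x0] unfolding is_norm_def
    by (metis order_le_less)
  have "N x0 * norm v \<le> N v" for v :: "real^'n"
  proof (cases "v = 0")
    case True then show ?thesis using N_basic(1)[OF assms] by simp
  next
    case False
    then have nv: "norm v > 0" by simp
    have "N x0 \<le> N ((1 / norm v) *s v)"
      by (rule x0(2)) (use nv in \<open>simp add: scalar_mult_eq_scaleR\<close>)
    also have "\<dots> = N v / norm v" using N_basic(5)[OF assms] by simp
    finally show ?thesis using nv by (simp add: field_simps)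
  qed
  then show ?thesis using that c by blast
qed

lemma grid_ball_finite:
  assumes "is_norm N" "\<delta> > 0"
  shows "finite {y \<in> grid \<delta>. N (y - (xf::real^'n)) \<le> r}"
proof -
  obtain c where c: "c > 0" "\<And>v::real^'n. c * norm v \<le> N v" using N_lower[OF assms(1)] by blast
  define B where "B = (r + N xf) / c"
  define K where "K = ceiling (B / \<delta>)"
  let ?g = "\<lambda>m::int^'n. \<delta> *s (\<chi> j. real_of_int (m$j))"
  have fin: "finite {m::int^'n. \<forall>j. m$j \<in> {-K..K}}"
  proof (rule finite_subset)
    show "{m::int^'n. \<forall>j. m$j \<in> {-K..K}} \<subseteq> vec_lambda ` (PiE UNIV (\<lambda>_. {-K..K}))"
    proof
      fix m :: "int^'n" assume "m \<in> {m::int^'n. \<forall>j. m$j \<in> {-K..K}}"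
      then have "(\<lambda>j. m$j) \<in> PiE UNIV (\<lambda>_. {-K..K})" by auto
      moreover have "m = vec_lambda (\<lambda>j. m$j)" by simp
      ultimately show "m \<in> vec_lambda ` (PiE UNIV (\<lambda>_. {-K..K}))" by blast
    qed
    show "finite (vec_lambda ` (PiE UNIV (\<lambda>_. {-K..K})) :: (int^'n) set)"
      by (intro finite_imageI finite_PiE) auto
  qed
  have "{y \<in> grid \<delta>. N (y - xf) \<le> r} \<subseteq> ?g ` {m::int^'n. \<forall>j. m$j \<in> {-K..K}}"
  proof
    fix y assume y: "y \<in> {y \<in> grid \<delta>. N (y - xf) \<le> r}"
    then obtain m :: "int^'n" where m: "y = ?g m" unfolding grid_def by blast
    have "N y \<le> N (y - xf) + N xf" using N_basic(3)[OF assms(1), of "y - xf" xf] by simp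
    then have "N y \<le> r + N xf" using y by simp
    then have "c * norm y \<le> r + N xf" using c(2)[of y] by linarith
    then have ny: "norm y \<le> B" unfolding B_def using c(1) by (simp add: field_simps)
    have "\<forall>j. m$j \<in> {-K..K}"
    proof
      fix j
      have "\<bar>y$j\<bar> \<le> B" using component_le_norm_cart[of y j] ny by linarith
      then have "\<delta> * \<bar>real_of_int (m$j)\<bar> \<le> B" using m assms(2) by (simp add: abs_mult)
      then have "\<bar>real_of_int (m$j)\<bar> \<le> B / \<delta>" using assms(2) by (simp add: field_simps)
      then have "\<bar>real_of_int (m$j)\<bar> \<le> real_of_int K" unfolding K_def
        using le_of_int_ceiling order_trans by blast
      then have "\<bar>m$j\<bar> \<le> K" by (metis of_int_abs of_int_le_iff)
      then show "m$j \<in> {-K..K}" by (simp add: abs_le_iff)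
    qed
    then show "y \<in> ?g ` {m::int^'n. \<forall>j. m$j \<in> {-K..K}}" using m by blast
  qed
  then show ?thesis using fin finite_subset by blast
qed

lemma cube_iff:
  assumes "\<delta> > 0"
  shows "x \<in> cube \<delta> m \<longleftrightarrow> m = (\<chi> j. floor (x$j / \<delta> + 1/2))"
proof -
  have "((real_of_int a - 1/2) * \<delta> \<le> y \<and> y < (real_of_int a + 1/2) * \<delta>) \<longleftrightarrow> a = floor (y / \<delta> + 1/2)"
    for a :: int and y :: real
  proof -
    have "a = floor (y / \<delta> + 1/2) \<longleftrightarrow> real_of_int a \<le> y / \<delta> + 1/2 \<and> y / \<delta> + 1/2 < real_of_int a + 1"
      by (metis floor_eq_iff)
    also have "\<dots> \<longleftrightarrow> ((real_of_int a - 1/2) * \<delta> \<le> y \<and> y < (real_of_int a + 1/2) * \<delta>)"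
      using assms by (simp add: field_simps)
    finally show ?thesis by simp
  qed
  then show ?thesis unfolding cube_def by (auto simp: vec_eq_iff)
qed

lemma roundoff_eq:
  assumes "\<delta> > 0"
  shows "roundoff \<delta> x = \<delta> *s (\<chi> j. real_of_int (floor (x$j / \<delta> + 1/2)))"
proof -
  have "(THE m. x \<in> cube \<delta> m) = (\<chi> j. floor (x$j / \<delta> + 1/2))"
    by (rule the_equality) (use cube_iff[OF assms] in auto)
  then show ?thesis unfolding roundoff_def by simp
qed

lemma roundoff_cube:
  assumes "\<delta> > 0"
  shows "x - roundoff \<delta> x \<in> cube \<delta> 0"
proof -
  have "x \<in> cube \<delta> (\<chi> j. floor (x$j / \<delta> + 1/2))" using cube_iff[OF assms, of x "(\<chi> j. floor (x$j / \<delta> + 1/2))"] by simp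
  then have h: "(real_of_int (floor (x$j / \<delta> + 1/2)) - 1/2) * \<delta> \<le> x$j \<and>
      x$j < (real_of_int (floor (x$j / \<delta> + 1/2)) + 1/2) * \<delta>" for j
    unfolding cube_def by auto
  have "(0 - 1/2) * \<delta> \<le> x$j - \<delta> * real_of_int (floor (x$j / \<delta> + 1/2)) \<and>
      x$j - \<delta> * real_of_int (floor (x$j / \<delta> + 1/2)) < (0 + 1/2) * \<delta>" for j
    using h[of j] by (simp add: algebra_simps)
  then show ?thesis unfolding roundoff_eq[OF assms] cube_def by simp
qed

lemma roundoff_grid: "roundoff \<delta> x \<in> grid \<delta>"
  unfolding roundoff_def grid_def by blast

lemma theta_bound:
  assumes "is_norm N" "\<delta> > 0" "(z::real^'n) \<in> cube \<delta> 0"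
  shows "N z \<le> theta N \<delta>"
proof -
  let ?S = "{N (x - y) | x y. x \<in> cube \<delta> (0::int^'n) \<and> y \<in> cube \<delta> 0}"
  have bdd: "bdd_above ?S"
  proof (rule bdd_aboveI)
    fix s assume "s \<in> ?S"
    then obtain x y where s: "s = N (x - y)" "x \<in> cube \<delta> (0::int^'n)" "y \<in> cube \<delta> 0" by blast
    have "N (x - y) \<le> (\<Sum>j\<in>UNIV. \<bar>(x - y)$j\<bar> * N (axis j 1))" by (rule N_upper[OF assms(1)])
    also have "\<dots> \<le> (\<Sum>j\<in>UNIV. \<delta> * N (axis j 1))"
    proof (rule sum_mono)
      fix j
      have "-(\<delta>/2) \<le> x$j" "x$j < \<delta>/2" "-(\<delta>/2) \<le> y$j" "y$j < \<delta>/2"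
        using s(2,3) unfolding cube_def by auto
      then have "\<bar>(x - y)$j\<bar> \<le> \<delta>" by (simp add: abs_le_iff)
      then show "\<bar>(x - y)$j\<bar> * N (axis j 1) \<le> \<delta> * N (axis j 1)"
        using N_basic(4)[OF assms(1)] by (simp add: mult_right_mono)
    qed
    finally show "s \<le> (\<Sum>j\<in>UNIV. \<delta> * N (axis j (1::real) :: real^'n))" using s by simp
  qed
  have key: "(1 + t) * N z \<le> 2 * theta N \<delta>" if t: "0 \<le> t" "t < 1" for t
  proof -
    have "(- t) *s z \<in> cube \<delta> 0"
    proof -
      have "- (\<delta> / 2) \<le> - t * z$j \<and> - t * z$j < \<delta> / 2" for j
      proof -
        have zj: "- (\<delta>/2) \<le> z$j" "z$j < \<delta>/2" using assms(3) unfolding cube_def by auto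
        have "t * z$j \<le> t * (\<delta>/2)" using mult_left_mono[of "z$j" "\<delta>/2" t] zj t by simp
        moreover have "t * (\<delta>/2) < \<delta>/2" using t assms(2) by simp
        moreover have "t * z$j \<ge> t * (-(\<delta>/2))" using mult_left_mono[of "-(\<delta>/2)" "z$j" t] zj t by linarith
        moreover have "t * (-(\<delta>/2)) > -(\<delta>/2)" using t assms(2) by simp
        ultimately show ?thesis by linarith
      qed
      then show ?thesis unfolding cube_def by auto
    qed
    then have "N (z - (- t) *s z) \<in> ?S" using assms(3) by blast
    then have "N (z - (- t) *s z) \<le> Sup ?S" using bdd by (rule cSup_upper)
    moreover have "z - (- t) *s z = (1 + t) *s z" by (simp add: vec_eq_iff algebra_simps)
    then have "N (z - (- t) *s z) = (1 + t) * N z" using N_basic(5)[OF assms(1), of "1 + t" z] t by simp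
    ultimately show ?thesis unfolding theta_def by simp
  qed
  show ?thesis
  proof (rule ccontr)
    assume "\<not> ?thesis"
    then have lt: "theta N \<delta> < N z" by simp
    have th0: "0 \<le> theta N \<delta>" using key[of 0] N_basic(4)[OF assms(1), of z] by simp
    define t where "t = theta N \<delta> / N z"
    have Np: "N z > 0" using lt th0 by linarith
    have "0 \<le> t" "t < 1" using th0 Np lt unfolding t_def by (auto simp: field_simps)
    then have "(1 + t) * N z \<le> 2 * theta N \<delta>" by (rule key)
    moreover have "(1 + t) * N z = N z + theta N \<delta>" unfolding t_def using Np by (simp add: field_simps)
    ultimately show False using lt by linarith
  qed
qed

lemma absorbing_Int:
  assumes "absorbing f C A" "absorbing f C B"
  shows "absorbing f C (A \<inter> B)"
  unfolding absorbing_def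
proof (intro conjI ballI)
  show "A \<inter> B \<subseteq> C" using assms unfolding absorbing_def by blast
  fix x assume x: "x \<in> C"
  obtain N1 where N1: "\<forall>i\<ge>N1. (f ^^ i) x \<in> A" using assms(1) x unfolding absorbing_def by blast
  obtain N2 where N2: "\<forall>i\<ge>N2. (f ^^ i) x \<in> B" using assms(2) x unfolding absorbing_def by blast
  show "\<exists>N. \<forall>i\<ge>N. (f ^^ i) x \<in> A \<inter> B"
    by (rule exI[of _ "max N1 N2"]) (use N1 N2 in auto)
qed

lemma min_absorbing_finite:
  assumes "absorbing f C L" "finite L"
  shows "min_absorbing_exists f C \<and> min_absorbing f C \<subseteq> L"
proof -
  obtain B where B: "absorbing f C B \<and> B \<subseteq> L"
    and Bmin: "\<forall>B'. absorbing f C B' \<and> B' \<subseteq> L \<longrightarrow> card B \<le> card B'"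
    using ex_has_least_nat[of "\<lambda>B. absorbing f C B \<and> B \<subseteq> L" L card] assms(1) by blast
  have finB: "finite B" using B assms(2) finite_subset by blast
  have sub: "B \<subseteq> A" if A: "absorbing f C A" for A
  proof -
    have "absorbing f C (A \<inter> B) \<and> A \<inter> B \<subseteq> L" using absorbing_Int[OF A] B by blast
    then have "card B \<le> card (A \<inter> B)" using Bmin by blast
    then have "A \<inter> B = B" using card_subset_eq[OF finB, of "A \<inter> B"]
      by (metis Int_lower2 card_mono finB le_antisym)
    then show ?thesis by blast
  qed
  have eq: "min_absorbing f C = B"
    unfolding min_absorbing_def using sub B by blast
  show ?thesis unfolding min_absorbing_exists_def eq using B by blast
qed

theorem corollary2:
  fixes N :: "real^'n \<Rightarrow> real" and w :: "real^'n \<Rightarrow> real^'n"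
    and \<delta> lam :: real and xf :: "real^'n"
  assumes "is_norm N"
    and "\<delta> > 0"
    and "0 \<le> lam" and "lam < 1"
    and "\<forall>x y. N (w x - w y) \<le> lam * N (x - y)"
    and "w xf = xf"
  shows "min_absorbing_exists (roundoff_map \<delta> w) (grid \<delta>)
    \<and> finite (min_absorbing (roundoff_map \<delta> w) (grid \<delta>))
    \<and> card (min_absorbing (roundoff_map \<delta> w) (grid \<delta>))
        \<le> card {y \<in> grid \<delta>. N (y - xf) \<le> theta N \<delta> / (1 - lam)}"
proof -
  define f where "f = roundoff_map \<delta> w"
  define R where "R = theta N \<delta> / (1 - lam)"
  define L where "L = {y \<in> grid \<delta>. N (y - xf) \<le> R}"
  have finL: "finite L" unfolding L_def by (rule grid_ball_finite[OF assms(1,2)])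
  have step: "N (f x - xf) \<le> theta N \<delta> + lam * N (x - xf)" for x
  proof -
    have "f x - xf = (roundoff \<delta> (w x) - w x) + (w x - w xf)"
      unfolding f_def roundoff_map_def using assms(6) by simp
    then have "N (f x - xf) \<le> N (roundoff \<delta> (w x) - w x) + N (w x - w xf)"
      using N_basic(3)[OF assms(1)] by metis
    moreover have "N (roundoff \<delta> (w x) - w x) \<le> theta N \<delta>"
      using theta_bound[OF assms(1,2) roundoff_cube[OF assms(2), of "w x"]]
        N_basic(6)[OF assms(1)] by metis
    moreover have "N (w x - w xf) \<le> lam * N (x - xf)" using assms(5) by blast
    ultimately show ?thesis by linarith
  qed
  have Req: "theta N \<delta> + lam * R = R" unfolding R_def using assms(4) by (simp add: field_simps)
  have iter: "N ((f ^^ k) x - xf) \<le> lam ^ k * N (x - xf) + R" for k x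
  proof (induction k)
    case 0
    have "(0::real^'n) \<in> cube \<delta> 0" unfolding cube_def using assms(2) by simp
    then have "0 \<le> theta N \<delta>" using theta_bound[OF assms(1,2)] N_basic(1)[OF assms(1)] by metis
    then have "0 \<le> R" unfolding R_def using assms(4) by simp
    then show ?case by simp
  next
    case (Suc k)
    have "N ((f ^^ Suc k) x - xf) \<le> theta N \<delta> + lam * N ((f ^^ k) x - xf)" using step by simp
    also have "\<dots> \<le> theta N \<delta> + lam * (lam ^ k * N (x - xf) + R)"
      using Suc assms(3) by (simp add: mult_left_mono)
    also have "\<dots> = lam ^ Suc k * N (x - xf) + R" using Req by (simp add: algebra_simps)
    finally show ?case .
  qed
  have fgrid: "(f ^^ k) x \<in> grid \<delta>" if "x \<in> grid \<delta>" for k x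
    using that by (cases k) (auto simp: f_def roundoff_map_def roundoff_grid)
  have absL: "absorbing f (grid \<delta>) L"
    unfolding absorbing_def
  proof (intro conjI ballI)
    show "L \<subseteq> grid \<delta>" unfolding L_def by blast
    fix x :: "real^'n" assume x: "x \<in> grid \<delta>"
    define e0 where "e0 = N (x - xf)"
    have e0: "0 \<le> e0" unfolding e0_def using N_basic(4)[OF assms(1)] by simp
    define S where "S = {y \<in> grid \<delta>. N (y - xf) \<le> R + e0} - L"
    have finS: "finite S" unfolding S_def by (rule finite_Diff, rule grid_ball_finite[OF assms(1,2)])
    define g where "g = Min (insert 1 ((\<lambda>y. N (y - xf) - R) ` S))"
    have g0: "g > 0" unfolding g_def using finS
      by (subst Min_gr_iff) (auto simp: S_def L_def)
    have gle: "g \<le> N (y - xf) - R" if "y \<in> S" for y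
      unfolding g_def using finS that by (intro Min_le) auto
    obtain k0 where k0: "lam ^ k0 * e0 < g"
    proof (cases "e0 = 0")
      case True then show ?thesis using that[of 0] g0 by simp
    next
      case False
      then have "e0 > 0" using e0 by simp
      then obtain k where "lam ^ k < g / e0" using real_arch_pow_inv[of "g / e0" lam] g0 assms(4) by auto
      then show ?thesis using that[of k] \<open>e0 > 0\<close> by (simp add: field_simps)
    qed
    show "\<exists>M. \<forall>i\<ge>M. (f ^^ i) x \<in> L"
    proof (intro exI allI impI)
      fix i assume i: "k0 \<le> i"
      have "lam ^ i \<le> lam ^ k0" using power_decreasing[OF i assms(3)] assms(4) by simp
      then have li: "lam ^ i * e0 \<le> lam ^ k0 * e0" using e0 by (simp add: mult_right_mono)
      have "lam ^ i \<le> 1" using assms(3,4) by (simp add: power_le_one)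
      then have li1: "lam ^ i * e0 \<le> e0" using e0 mult_right_mono[of "lam ^ i" 1 e0] by simp
      have it: "N ((f ^^ i) x - xf) \<le> lam ^ i * e0 + R" using iter unfolding e0_def by blast
      show "(f ^^ i) x \<in> L"
      proof (rule ccontr)
        assume nL: "(f ^^ i) x \<notin> L"
        have "(f ^^ i) x \<in> S" unfolding S_def using nL it li1 fgrid[OF x, of i] by simp
        then have "g \<le> N ((f ^^ i) x - xf) - R" by (rule gle)
        then show False using it li k0 by linarith
      qed
    qed
  qed
  have "min_absorbing_exists f (grid \<delta>) \<and> min_absorbing f (grid \<delta>) \<subseteq> L"
    by (rule min_absorbing_finite[OF absL finL])
  then have A: "min_absorbing_exists f (grid \<delta>)" and B: "min_absorbing f (grid \<delta>) \<subseteq> L" by auto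
  have C: "finite (min_absorbing f (grid \<delta>))" using B finL by (rule finite_subset)
  have D: "card (min_absorbing f (grid \<delta>)) \<le> card L" using finL B by (rule card_mono)
  show ?thesis using A C D unfolding f_def L_def R_def by blast
qed

end
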